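(* Under the hypotheses of Lemma 2 (stated in the context), let $\bm{U}\bm{\Sigma}\bm{V}^\top$ be the compact SVD of $\bm{X}\bm{Y}^\top$. There exists an invertible $\bm{Q}\in\mathbb{R}^{r\times r}$ with $\bm{X}=\bm{U}\bm{\Sigma}^{1/2}\bm{Q}$, $\bm{Y}=\bm{V}\bm{\Sigma}^{1/2}\bm{Q}^{-\top}$ and $\|\bm{\Sigma}_{\bm{Q}}-\bm{\Sigma}_{\bm{Q}}^{-1}\|_{\mathrm{F}}\le 8\sqrt{\kappa}\frac{p}{\lambda\sqrt{\sigma_{\min}}}\|\nabla f(\bm{X},\bm{Y})\|_{\mathrm{F}}\le 8c\sqrt{c_{\mathrm{inj}}p/\kappa}$, where $\bm{\Sigma}_{\bm{Q}}$ is the diagonal matrix of singular values of $\bm{Q}$ and $c$ is the constant in the gradient hypothesis.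
   Context: Setting: $\bm{M}^\star\in\mathbb{R}^{n\times n}$ rank $r$, nonzero singular values in $[\sigma_{\min},\sigma_{\max}]$, $\kappa=\sigma_{\max}/\sigma_{\min}$, $\bm{M}=\bm{M}^\star+\bm{E}$, $\Omega\subseteq[n]^2$, $p\in(0,1]$, $\lambda>0$, $\mathcal{P}_\Omega$ zeros entries outside $\Omega$. $f(\bm{X},\bm{Y})=\frac{1}{2p}\|\mathcal{P}_\Omega(\bm{X}\bm{Y}^\top-\bm{M})\|_{\mathrm{F}}^2+\frac{\lambda}{2p}(\|\bm{X}\|_{\mathrm{F}}^2+\|\bm{Y}\|_{\mathrm{F}}^2)$ with $\nabla_{\bm{X}}f=\frac1p[\mathcal{P}_\Omega(\bm{X}\bm{Y}^\top-\bm{M})\bm{Y}+\lambda\bm{X}]$, $\nabla_{\bm{Y}}f=\frac1p[\mathcal{P}_\Omega(\bm{X}\bm{Y}^\top-\bm{M})^\top\bm{X}+\lambda\bm{Y}]$. Hypotheses of Lemma 2: $\bm{X},\bm{Y}\in\mathbb{R}^{n\times r}$ have all singular values in $[\sqrt{\sigma_{\min}/2},\sqrt{2\sigma_{\max}}]$; $\|\mathcal{P}_\Omega(\bm{E})\|<\lambda/8$; $\|\mathcal{P}_\Omega(\bm{X}\bm{Y}^\top-\bm{M}^\star)-p(\bm{X}\bm{Y}^\top-\bm{M}^\star)\|<\lambda/8$; there is $c_{\mathrm{inj}}>0$ with $p^{-1}\|\mathcal{P}_\Omega(\bm{H})\|_{\mathrm{F}}^2\ge c_{\mathrm{inj}}\|\bm{H}\|_{\mathrm{F}}^2$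 for all $\bm{H}$ in the tangent space $\{\bm{U}\bm{A}^\top+\bm{B}\bm{V}^\top\}$ of $\bm{X}\bm{Y}^\top$; and $\|\nabla f(\bm{X},\bm{Y})\|_{\mathrm{F}}\le c\frac{\sqrt{c_{\mathrm{inj}}p}}{\kappa}\frac{\lambda}{p}\sqrt{\sigma_{\min}}$ for a sufficiently small absolute constant $c$. *)

theory Defs
  imports "Jordan_Normal_Form.DL_Rank" "Jordan_Normal_Form.Char_Poly"
begin

text \<open>Real matrices are represented as JNF matrices of type real mat with explicit
dimensions, so that the dimensions n and r can be universally quantified inside the
statement (needed because the constant c must be absolute, i.e. independent of n, r).
Indices are 0-based: [n] is rendered as {0..<n}.\<close>

definition frob :: "real mat \<Rightarrow> real" where
  "frob A = sqrt (\<Sum>i<dim_row A. \<Sum>j<dim_col A. (A $$ (i,j))\<^sup>2)"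

definition vnorm :: "real vec \<Rightarrow> real" where
  "vnorm v = sqrt (v \<bullet> v)"

definition op_norm :: "real mat \<Rightarrow> real" where
  "op_norm A = Sup {vnorm (A *\<^sub>v v) | v. v \<in> carrier_vec (dim_col A) \<and> vnorm v \<le> 1}"

definition sing_vals :: "real mat \<Rightarrow> real set" where
  "sing_vals A = {s. s \<ge> 0 \<and> eigenvalue (transpose_mat A * A) (s\<^sup>2)}"

definition orthonormal_cols :: "real mat \<Rightarrow> bool" where
  "orthonormal_cols U \<longleftrightarrow> transpose_mat U * U = 1\<^sub>m (dim_col U)"

definition compact_svd :: "nat \<Rightarrow> nat \<Rightarrow> real mat \<Rightarrow> real mat \<Rightarrow> real mat \<Rightarrow> real mat \<Rightarrow> bool" where
  "compact_svd n r A U S V \<longleftrightarrow>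
     U \<in> carrier_mat n r \<and> V \<in> carrier_mat n r \<and> S \<in> carrier_mat r r \<and>
     orthonormal_cols U \<and> orthonormal_cols V \<and> diagonal_mat S \<and>
     (\<forall>i<r. S $$ (i,i) > 0) \<and> (\<forall>i j. i \<le> j \<longrightarrow> j < r \<longrightarrow> S $$ (j,j) \<le> S $$ (i,i)) \<and>
     A = U * S * transpose_mat V"

definition square_svd :: "nat \<Rightarrow> real mat \<Rightarrow> real mat \<Rightarrow> real mat \<Rightarrow> real mat \<Rightarrow> bool" where
  "square_svd r Q P D R \<longleftrightarrow>
     P \<in> carrier_mat r r \<and> R \<in> carrier_mat r r \<and> D \<in> carrier_mat r r \<and>
     orthonormal_cols P \<and> orthonormal_cols R \<and> diagonal_mat D \<and>
     (\<forall>i<r. D $$ (i,i) \<ge> 0) \<and> Q = P * D * transpose_mat R"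

definition diag_sqrt :: "real mat \<Rightarrow> real mat" where
  "diag_sqrt S = mat (dim_row S) (dim_col S) (\<lambda>(i,j). if i = j then sqrt (S $$ (i,i)) else 0)"

definition diag_inv :: "real mat \<Rightarrow> real mat" where
  "diag_inv S = mat (dim_row S) (dim_col S) (\<lambda>(i,j). if i = j then 1 / S $$ (i,i) else 0)"

definition P_Omega :: "(nat \<times> nat) set \<Rightarrow> real mat \<Rightarrow> real mat" where
  "P_Omega \<Omega> A = mat (dim_row A) (dim_col A) (\<lambda>ij. if ij \<in> \<Omega> then A $$ ij else 0)"

definition grad_X :: "(nat \<times> nat) set \<Rightarrow> real \<Rightarrow> real \<Rightarrow> real mat \<Rightarrow> real mat \<Rightarrow> real mat \<Rightarrow> real mat" where
  "grad_X \<Omega> p lam M X Y =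
     (1/p) \<cdot>\<^sub>m (P_Omega \<Omega> (X * transpose_mat Y - M) * Y + lam \<cdot>\<^sub>m X)"

definition grad_Y :: "(nat \<times> nat) set \<Rightarrow> real \<Rightarrow> real \<Rightarrow> real mat \<Rightarrow> real mat \<Rightarrow> real mat \<Rightarrow> real mat" where
  "grad_Y \<Omega> p lam M X Y =
     (1/p) \<cdot>\<^sub>m (transpose_mat (P_Omega \<Omega> (X * transpose_mat Y - M)) * X + lam \<cdot>\<^sub>m Y)"

definition grad_norm :: "(nat \<times> nat) set \<Rightarrow> real \<Rightarrow> real \<Rightarrow> real mat \<Rightarrow> real mat \<Rightarrow> real mat \<Rightarrow> real" where
  "grad_norm \<Omega> p lam M X Y = sqrt ((frob (grad_X \<Omega> p lam M X Y))\<^sup>2 + (frob (grad_Y \<Omega> p lam M X Y))\<^sup>2)"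

end

theory Submission
  imports Defs "HOL-Analysis.Analysis"
begin


lemma compact_ball_fun:
  fixes r :: nat
  shows "compact {f::nat\<Rightarrow>real. (\<forall>i. f i \<in> (if i < r then {-1..1} else {0})) \<and> (\<Sum>i<r. (f i)^2) = 1}"
proof -
  define T :: "nat \<Rightarrow> real set" where "T i = (if i < r then {-1..1} else {0})" for i
  have "compactin (product_topology (\<lambda>i. euclidean) UNIV) (PiE UNIV T)"
    by (subst compactin_PiE) (auto simp: T_def)
  hence c: "compact (Pi UNIV T)"
    by (simp add: euclidean_product_topology PiE_UNIV_domain)
  have cl: "closed {f::nat\<Rightarrow>real. (\<Sum>i<r. (f i)^2) = 1}"
    by (intro closed_Collect_eq continuous_intros continuous_on_product_coordinates)
  have "{f::nat\<Rightarrow>real. (\<forall>i. f i \<in> T i) \<and> (\<Sum>i<r. (f i)^2) = 1} = Pi UNIV T \<inter> {f. (\<Sum>i<r. (f i)^2) = 1}"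
    by auto
  with compact_Int_closed[OF c cl] show ?thesis unfolding T_def by simp
qed



lemma qf_sum:
  fixes X :: "real mat"
  assumes X: "X \<in> carrier_mat n r" and v: "v \<in> carrier_vec r"
  shows "(X *\<^sub>v v) \<bullet> (X *\<^sub>v v) = (\<Sum>k<n. (\<Sum>i<r. X$$(k,i) * v$i)^2)"
  using X v by (simp add: scalar_prod_def power2_eq_square lessThan_atLeast0 row_def)

lemma sq_sum:
  fixes v :: "real Matrix.vec"
  assumes v: "v \<in> carrier_vec r"
  shows "v \<bullet> v = (\<Sum>i<r. (v$i)^2)"
  using v by (simp add: scalar_prod_def power2_eq_square lessThan_atLeast0)

lemma lin_quad_zero:
  fixes c d :: real
  assumes "\<And>t. 0 \<le> 2*t*c + t^2*d"
  shows "c = 0"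
proof (rule ccontr)
  assume c: "c \<noteq> 0"
  define t where "t = - c / (\<bar>d\<bar> + 1)"
  have pos: "\<bar>d\<bar> + 1 > 0" by simp
  have gen: "2*(-c/a)*c + (-c/a)^2*d = (c^2/a^2) * (d - 2*a)" if "a \<noteq> 0" for a
    using that by (simp add: field_simps power2_eq_square)
  have "2*t*c + t^2*d = (c^2/(\<bar>d\<bar>+1)^2) * (d - 2*(\<bar>d\<bar>+1))"
    unfolding t_def using gen[of "\<bar>d\<bar>+1"] pos by simp
  moreover have "d - 2*(\<bar>d\<bar>+1) < 0" by (cases "d \<ge> 0") auto
  moreover have "c^2/(\<bar>d\<bar>+1)^2 > 0" using c by simp
  ultimately have "2*t*c + t^2*d < 0" by (metis mult_pos_neg)
  with assms[of t] show False by simp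
qed

lemma self_scalar_zero:
  fixes u :: "real Matrix.vec"
  assumes u: "u \<in> carrier_vec r" and z: "u \<bullet> u = 0"
  shows "u = 0\<^sub>v r"
proof -
  have "(\<Sum>i<r. (u$i)^2) = 0" using z sq_sum[OF u] by simp
  hence "\<forall>i\<in>{..<r}. (u$i)^2 = 0" by (subst (asm) sum_nonneg_eq_0_iff) auto
  thus ?thesis using u by (intro eq_vecI) auto
qed




lemma expand_sq:
  fixes x y :: "real Matrix.vec"
  assumes x: "x \<in> carrier_vec k" and y: "y \<in> carrier_vec k"
  shows "(x + t \<cdot>\<^sub>v y) \<bullet> (x + t \<cdot>\<^sub>v y) = x \<bullet> x + 2*t*(x \<bullet> y) + t^2*(y \<bullet> y)"
proof -
  have "(x + t \<cdot>\<^sub>v y) \<bullet> (x + t \<cdot>\<^sub>v y) = x \<bullet> x + t*(y \<bullet> x) + t*(x \<bullet> y) + t*(t*(y \<bullet> y))"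
    using x y by (simp add: add_scalar_prod_distrib[of _ k] scalar_prod_add_distrib[of _ k] algebra_simps)
  also have "y \<bullet> x = x \<bullet> y" using comm_scalar_prod[OF y x] .
  finally show ?thesis by (simp add: power2_eq_square algebra_simps)
qed

lemma rayleigh:
  fixes X :: "real mat"
  assumes X: "X \<in> carrier_mat n r" and r: "0 < r"
  shows "\<exists>m. 0 \<le> m \<and> eigenvalue (transpose_mat X * X) m \<and>
     (\<forall>v\<in>carrier_vec r. m * (v \<bullet> v) \<le> (X *\<^sub>v v) \<bullet> (X *\<^sub>v v))"
proof -
  define K where "K = {f::nat\<Rightarrow>real. (\<forall>i. f i \<in> (if i < r then {-1..1} else {0})) \<and> (\<Sum>i<r. (f i)^2) = 1}"
  define g where "g = (\<lambda>f::nat\<Rightarrow>real. \<Sum>k<n. (\<Sum>i<r. X$$(k,i) * f i)^2)"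
  have cK: "compact K" unfolding K_def by (rule compact_ball_fun)
  have cg: "continuous_on K g" unfolding g_def
    by (intro continuous_intros) (auto intro: continuous_on_subset[OF continuous_on_product_coordinates])
  have ne: "(\<lambda>i. if i = 0 then 1 else 0) \<in> K"
  proof -
    have "(\<Sum>i<r. (if i = 0 then 1 else 0::real)^2) = (\<Sum>i<r. if i = 0 then 1 else 0)"
      by (rule sum.cong) auto
    also have "\<dots> = 1" using r by simp
    finally show ?thesis using r unfolding K_def by auto
  qed
  obtain f0 where f0K: "f0 \<in> K" and f0min: "\<And>f. f \<in> K \<Longrightarrow> g f0 \<le> g f"
    using continuous_attains_inf[OF cK _ cg] ne by blast
  define v0 where "v0 = Matrix.vec r f0"
  define m where "m = g f0"
  have v0: "v0 \<in> carrier_vec r" unfolding v0_def by simp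
  have v0n: "v0 \<bullet> v0 = 1" using f0K sq_sum[OF v0] by (simp add: K_def v0_def)
  have mq: "m = (X *\<^sub>v v0) \<bullet> (X *\<^sub>v v0)" using qf_sum[OF X v0]
    by (simp add: m_def g_def v0_def)
  have m0: "0 \<le> m" unfolding m_def g_def by (intro sum_nonneg) simp
  have bound: "m * (v \<bullet> v) \<le> (X *\<^sub>v v) \<bullet> (X *\<^sub>v v)" if v: "v \<in> carrier_vec r" for v
  proof (cases "v \<bullet> v = 0")
    case True
    thus ?thesis using qf_sum[OF X v] by (simp add: sum_nonneg)
  next
    case False
    define nv where "nv = v \<bullet> v"
    have nvpos: "nv > 0" using False sq_sum[OF v] unfolding nv_def
      by (metis (no_types, lifting) less_eq_real_def sum_nonneg zero_le_power2)
    define f where "f = (\<lambda>i. if i < r then v$i / sqrt nv else 0)"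
    have fi: "-1 \<le> v$i / sqrt nv \<and> v$i / sqrt nv \<le> 1" if i: "i < r" for i
    proof -
      have "(v$i)^2 \<le> nv" unfolding nv_def sq_sum[OF v]
        using i by (intro member_le_sum) auto
      hence "\<bar>v$i\<bar> \<le> sqrt nv" using real_le_rsqrt by (metis real_sqrt_abs real_sqrt_le_mono)
      hence A: "\<bar>v$i / sqrt nv\<bar> \<le> 1" using nvpos by (simp add: abs_div divide_le_eq_1)
      show ?thesis using abs_le_iff[of "v$i / sqrt nv" 1] A by linarith
    qed
    have "(\<Sum>i<r. (f i)^2) = (\<Sum>i<r. (v$i)^2) / nv"
      unfolding f_def using nvpos by (simp add: power_divide sum_divide_distrib)
    also have "\<dots> = 1" using nvpos unfolding nv_def sq_sum[OF v] by simp
    finally have fK: "f \<in> K" unfolding K_def f_def using fi by auto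
    have inner: "(\<Sum>i<r. X$$(k,i) * f i) = (\<Sum>i<r. X$$(k,i) * v$i) / sqrt nv" for k
      unfolding f_def by (auto simp: sum_divide_distrib intro!: sum.cong)
    have "g f = (\<Sum>k<n. (\<Sum>i<r. X$$(k,i) * v$i)^2 / nv)"
      unfolding g_def inner using nvpos by (simp add: power_divide)
    also have "\<dots> = (\<Sum>k<n. (\<Sum>i<r. X$$(k,i) * v$i)^2) / nv"
      by (simp add: sum_divide_distrib)
    finally have "g f = (\<Sum>k<n. (\<Sum>i<r. X$$(k,i) * v$i)^2) / nv" .
    hence "m \<le> ((X *\<^sub>v v) \<bullet> (X *\<^sub>v v)) / nv" using f0min[OF fK] unfolding m_def qf_sum[OF X v] by simp
    thus ?thesis using nvpos unfolding nv_def by (simp add: pos_le_divide_eq)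
  qed
  have orth: "(X *\<^sub>v w) \<bullet> (X *\<^sub>v v0) = m * (w \<bullet> v0)" if w: "w \<in> carrier_vec r" for w
  proof -
    define a where "a = X *\<^sub>v v0"
    define b where "b = X *\<^sub>v w"
    have a: "a \<in> carrier_vec n" and b: "b \<in> carrier_vec n" unfolding a_def b_def using X v0 w by auto
    have "0 \<le> 2*t*(a \<bullet> b - m*(v0 \<bullet> w)) + t^2*(b \<bullet> b - m*(w \<bullet> w))" for t
    proof -
      have vt: "v0 + t \<cdot>\<^sub>v w \<in> carrier_vec r" using v0 w by auto
      have "X *\<^sub>v (v0 + t \<cdot>\<^sub>v w) = a + t \<cdot>\<^sub>v b"
        unfolding a_def b_def using X v0 w by (simp add: mult_add_distrib_mat_vec mult_mat_vec)
      with bound[OF vt] have "m * (1 + 2*t*(v0 \<bullet> w) + t^2*(w \<bullet> w)) \<le> a \<bullet> a + 2*t*(a \<bullet> b) + t^2*(b \<bullet> b)"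
        using expand_sq[OF v0 w, of t] expand_sq[OF a b, of t] v0n by simp
      moreover have "m = a \<bullet> a" using mq a_def by simp
      ultimately show ?thesis by (simp add: algebra_simps)
    qed
    from lin_quad_zero[OF this] have "a \<bullet> b = m * (v0 \<bullet> w)" by simp
    moreover have "a \<bullet> b = b \<bullet> a" using comm_scalar_prod[OF a b] .
    moreover have "v0 \<bullet> w = w \<bullet> v0" using comm_scalar_prod[OF v0 w] .
    ultimately show ?thesis unfolding a_def b_def by simp
  qed
  define u where "u = (transpose_mat X * X) *\<^sub>v v0 - m \<cdot>\<^sub>v v0"
  have XTX: "transpose_mat X * X \<in> carrier_mat r r" using X by auto
  have u: "u \<in> carrier_vec r" unfolding u_def using XTX v0 by auto
  have "(transpose_mat X * X) *\<^sub>v v0 = transpose_mat X *\<^sub>v (X *\<^sub>v v0)"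
    using X v0 by (meson assoc_mult_mat_vec transpose_carrier_mat)
  hence "((transpose_mat X * X) *\<^sub>v v0) \<bullet> u = (X *\<^sub>v v0) \<bullet> (X *\<^sub>v u)"
    using transpose_vec_mult_scalar[OF X u, of "X *\<^sub>v v0"] X v0 by simp
  also have "\<dots> = m * (u \<bullet> v0)"
  proof -
    have Xv0: "X *\<^sub>v v0 \<in> carrier_vec n" and Xu: "X *\<^sub>v u \<in> carrier_vec n" using X v0 u by auto
    show ?thesis using orth[OF u] comm_scalar_prod[OF Xv0 Xu] by simp
  qed
  finally have "u \<bullet> u = 0" unfolding u_def
    using minus_scalar_prod_distrib[of "(transpose_mat X * X) *\<^sub>v v0" r "m \<cdot>\<^sub>v v0" u] XTX v0 u
      comm_scalar_prod[OF u v0] by (simp add: u_def)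
  hence "u = 0\<^sub>v r" by (rule self_scalar_zero[OF u])
  hence ui: "\<And>i. i < r \<Longrightarrow> u $ i = 0" by simp
  have ev: "(transpose_mat X * X) *\<^sub>v v0 = m \<cdot>\<^sub>v v0"
  proof (rule eq_vecI)
    fix i assume "i < dim_vec (m \<cdot>\<^sub>v v0)"
    hence i: "i < r" using v0 by simp
    from ui[OF i] show "((transpose_mat X * X) *\<^sub>v v0) $ i = (m \<cdot>\<^sub>v v0) $ i"
      unfolding u_def using i XTX v0 by simp
  qed (use X v0 in simp)
  have "v0 \<noteq> 0\<^sub>v r" using v0n by auto
  hence "eigenvalue (transpose_mat X * X) m" unfolding eigenvalue_def eigenvector_def
    using ev v0 X by auto
  thus ?thesis using m0 bound by blast
qed



lemma sv_lower:
  fixes X :: "real mat"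
  assumes X: "X \<in> carrier_mat n r" and r: "0 < r" and a: "0 \<le> a"
    and sv: "\<forall>s\<in>sing_vals X. sqrt a \<le> s \<and> s \<le> sqrt b"
  shows "a \<le> b" "\<forall>v\<in>carrier_vec r. a * (v \<bullet> v) \<le> (X *\<^sub>v v) \<bullet> (X *\<^sub>v v)"
proof -
  obtain m where m0: "0 \<le> m" and ev: "eigenvalue (transpose_mat X * X) m"
    and bd: "\<forall>v\<in>carrier_vec r. m * (v \<bullet> v) \<le> (X *\<^sub>v v) \<bullet> (X *\<^sub>v v)"
    using rayleigh[OF X r] by blast
  have "sqrt m \<in> sing_vals X" unfolding sing_vals_def using m0 ev by simp
  with sv have "sqrt a \<le> sqrt m" "sqrt m \<le> sqrt b" by auto
  hence am: "a \<le> m" and "m \<le> b" by auto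
  thus "a \<le> b" by simp
  show "\<forall>v\<in>carrier_vec r. a * (v \<bullet> v) \<le> (X *\<^sub>v v) \<bullet> (X *\<^sub>v v)"
  proof
    fix v :: "real Matrix.vec" assume v: "v \<in> carrier_vec r"
    have "0 \<le> v \<bullet> v" unfolding sq_sum[OF v] by (intro sum_nonneg) auto
    hence "a * (v \<bullet> v) \<le> m * (v \<bullet> v)" using am by (rule mult_right_mono[rotated])
    with bd v show "a * (v \<bullet> v) \<le> (X *\<^sub>v v) \<bullet> (X *\<^sub>v v)" by auto
  qed
qed

definition dm :: "(nat \<Rightarrow> real) \<Rightarrow> nat \<Rightarrow> real mat" where
  "dm f k = Matrix.mat k k (\<lambda>(i,j). if i = j then f i else 0)"

lemma dm_carrier[simp]: "dm f k \<in> carrier_mat k k" unfolding dm_def by simp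

lemma dm_mult: "dm f k * dm g k = dm (\<lambda>i. f i * g i) k"
proof (rule eq_matI)
  fix i j assume i: "i < dim_row (dm (\<lambda>i. f i * g i) k)" and j: "j < dim_col (dm (\<lambda>i. f i * g i) k)"
  hence i: "i < k" and j: "j < k" by (auto simp: dm_def)
  have "(dm f k * dm g k) $$ (i,j) = (\<Sum>l\<in>{0..<k}. (if i = l then f i else 0) * (if l = j then g l else 0))"
    using i j by (simp add: dm_def scalar_prod_def row_def col_def)
  also have "\<dots> = (\<Sum>l\<in>{0..<k}. if l = i then (if i = j then f i * g i else 0) else 0)"
    by (rule sum.cong) auto
  also have "\<dots> = (if i = j then f i * g i else 0)" using i by simp
  finally show "(dm f k * dm g k) $$ (i,j) = dm (\<lambda>i. f i * g i) k $$ (i,j)"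
    using i j by (simp add: dm_def)
qed (auto simp: dm_def)

lemma dm_one: "(\<And>i. i < k \<Longrightarrow> f i = 1) \<Longrightarrow> dm f k = 1\<^sub>m k"
  by (intro eq_matI) (auto simp: dm_def)

lemma dm_cong: "(\<And>i. i < k \<Longrightarrow> f i = g i) \<Longrightarrow> dm f k = dm g k"
  by (intro eq_matI) (auto simp: dm_def)

lemma dm_transpose[simp]: "transpose_mat (dm f k) = dm f k"
  by (intro eq_matI) (auto simp: dm_def)

lemma diag_is_dm:
  assumes "S \<in> carrier_mat k k" "diagonal_mat S"
  shows "S = dm (\<lambda>i. S $$ (i,i)) k"
  using assms by (intro eq_matI) (auto simp: dm_def diagonal_mat_def)

lemma diag_sqrt_dm:
  assumes "S \<in> carrier_mat k k"
  shows "diag_sqrt S = dm (\<lambda>i. sqrt (S $$ (i,i))) k"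
  using assms by (intro eq_matI) (auto simp: dm_def diag_sqrt_def)




lemma exist_Q:
  fixes X Y U S V :: "real mat"
  assumes X: "X \<in> carrier_mat n r" and Y: "Y \<in> carrier_mat n r"
    and svd: "compact_svd n r (X * transpose_mat Y) U S V"
  shows "\<exists>Q Qinv. Q \<in> carrier_mat r r \<and> Qinv \<in> carrier_mat r r \<and>
       inverts_mat Q Qinv \<and> inverts_mat Qinv Q \<and>
       X = U * diag_sqrt S * Q \<and> Y = V * diag_sqrt S * transpose_mat Qinv"
proof -
  from svd have U: "U \<in> carrier_mat n r" and V: "V \<in> carrier_mat n r" and S: "S \<in> carrier_mat r r"
    and UU: "transpose_mat U * U = 1\<^sub>m r" and VV: "transpose_mat V * V = 1\<^sub>m r"
    and dS: "diagonal_mat S" and Spos: "\<forall>i<r. S $$ (i,i) > 0"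
    and A: "X * transpose_mat Y = U * S * transpose_mat V"
    unfolding compact_svd_def orthonormal_cols_def by auto
  define s where "s = (\<lambda>i. S $$ (i,i))"
  have Sdm: "S = dm s r" unfolding s_def by (rule diag_is_dm[OF S dS])
  define Sh where "Sh = dm (\<lambda>i. sqrt (s i)) r"
  define Shi where "Shi = dm (\<lambda>i. 1 / sqrt (s i)) r"
  define Sinv where "Sinv = dm (\<lambda>i. 1 / s i) r"
  have Shd: "diag_sqrt S = Sh" unfolding Sh_def s_def by (rule diag_sqrt_dm[OF S])
  have Sh: "Sh \<in> carrier_mat r r" and Shi: "Shi \<in> carrier_mat r r" and Sinv: "Sinv \<in> carrier_mat r r"
    unfolding Sh_def Shi_def Sinv_def by auto
  have ShShi: "Sh * Shi = 1\<^sub>m r" unfolding Sh_def Shi_def dm_mult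
    by (rule dm_one) (use Spos in \<open>auto simp: s_def\<close>)
  have SSinv: "S * Sinv = 1\<^sub>m r" unfolding Sdm Sinv_def dm_mult
    by (rule dm_one) (use Spos in \<open>auto simp: s_def\<close>)
  have ShiSShi: "Shi * (S * Shi) = 1\<^sub>m r" unfolding Sdm Shi_def dm_mult
    by (rule dm_one) (use Spos in \<open>auto simp: s_def\<close>)
  have ST: "transpose_mat S = S" unfolding Sdm by simp
  have ShiT: "transpose_mat Shi = Shi" unfolding Shi_def by simp
  define Ut where "Ut = transpose_mat U"
  define Vt where "Vt = transpose_mat V"
  define Xt where "Xt = transpose_mat X"
  define Yt where "Yt = transpose_mat Y"
  have UT: "Ut \<in> carrier_mat r n" and VT: "Vt \<in> carrier_mat r n"
    and XT: "Xt \<in> carrier_mat r n" and YT: "Yt \<in> carrier_mat r n"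
    using U V X Y by (auto simp: Ut_def Vt_def Xt_def Yt_def)
  note UU = UU[folded Ut_def] and VV = VV[folded Vt_def] and A = A[folded Yt_def Vt_def]
  have SVt: "S * Vt \<in> carrier_mat r n" and SUt: "S * Ut \<in> carrier_mat r n"
    and VSi: "V * Sinv \<in> carrier_mat n r" and USi: "U * Sinv \<in> carrier_mat n r"
    and VShi: "V * Shi \<in> carrier_mat n r" and US: "U * S \<in> carrier_mat n r"
    and UtX: "Ut * X \<in> carrier_mat r r" and VtY: "Vt * Y \<in> carrier_mat r r"
    and XYt: "X * Yt \<in> carrier_mat n n"
    using U V S Sinv Shi UT VT X Y XT YT by auto
  note as = assoc_mult_mat
  define W where "W = Yt * (V * Sinv)"
  have W: "W \<in> carrier_mat r r" unfolding W_def using YT V Sinv by auto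
  have XW: "X * W = U"
  proof -
    have "X * W = (X * Yt) * (V * Sinv)" unfolding W_def using as[OF X YT VSi] by simp
    also have "\<dots> = U * (S * ((Vt * V) * Sinv))" unfolding A
      using as[OF U S VT] as[OF U SVt VSi] as[OF S VT VSi] as[OF VT V Sinv] by simp
    also have "\<dots> = U" unfolding VV using S Sinv U SSinv by simp
    finally show ?thesis .
  qed
  have "(Ut * X) * W = 1\<^sub>m r" using XW UU as[OF UT X W] by simp
  hence WUX: "W * (Ut * X) = 1\<^sub>m r"
    by (rule mat_mult_left_right_inverse[rotated 2]) (use UT X W in auto)
  have XUUX: "U * (Ut * X) = X"
  proof -
    have "X = X * (W * (Ut * X))" unfolding WUX using X by simp
    also have "\<dots> = (X * W) * (Ut * X)" using as[OF X W UtX] by simp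
    finally show ?thesis unfolding XW by simp
  qed
  define Z where "Z = Xt * (U * Sinv)"
  have Z: "Z \<in> carrier_mat r r" unfolding Z_def using XT U Sinv by auto
  have YXT: "Y * Xt = V * (S * Ut)"
  proof -
    have "transpose_mat (X * Yt) = Y * Xt" using transpose_mult[OF X YT] by (simp add: Yt_def Xt_def)
    moreover
    have "transpose_mat (U * S * Vt) = V * (S * Ut)" using transpose_mult[OF US VT] transpose_mult[OF U S] ST
      by (simp add: Vt_def Ut_def)
    ultimately show ?thesis unfolding A by simp
  qed
  have YZ: "Y * Z = V"
  proof -
    have "Y * Z = (Y * Xt) * (U * Sinv)" unfolding Z_def using as[OF Y XT USi] by simp
    also have "\<dots> = V * (S * ((Ut * U) * Sinv))" unfolding YXT
      using as[OF V SUt USi] as[OF S UT USi] as[OF UT U Sinv] by simp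
    also have "\<dots> = V" unfolding UU using S Sinv V SSinv by simp
    finally show ?thesis .
  qed
  have "(Vt * Y) * Z = 1\<^sub>m r" using YZ VV as[OF VT Y Z] by simp
  hence ZVY: "Z * (Vt * Y) = 1\<^sub>m r"
    by (rule mat_mult_left_right_inverse[rotated 2]) (use VT Y Z in auto)
  have YVVY: "V * (Vt * Y) = Y"
  proof -
    have "Y = Y * (Z * (Vt * Y))" unfolding ZVY using Y by simp
    also have "\<dots> = (Y * Z) * (Vt * Y)" using as[OF Y Z VtY] by simp
    finally show ?thesis unfolding YZ by simp
  qed
  define Q where "Q = Shi * (Ut * X)"
  define Qinv where "Qinv = Yt * (V * Shi)"
  have Q: "Q \<in> carrier_mat r r" unfolding Q_def using Shi UT X by auto
  have Qi: "Qinv \<in> carrier_mat r r" unfolding Qinv_def using YT V Shi by auto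
  have QQi: "Q * Qinv = 1\<^sub>m r"
  proof -
    have YtVShi: "Yt * (V * Shi) \<in> carrier_mat r r" using YT VShi by simp
    have XYtVShi: "X * (Yt * (V * Shi)) \<in> carrier_mat n r" using X YtVShi by simp
    have SVtVShi: "S * (Vt * (V * Shi)) \<in> carrier_mat r r" using S VT VShi by simp
    have VtVShi: "Vt * (V * Shi) \<in> carrier_mat r r" using VT VShi by simp
    have "Q * Qinv = Shi * (Ut * ((X * Yt) * (V * Shi)))"
      unfolding Q_def Qinv_def using as[OF Shi UtX YtVShi] as[OF UT X YtVShi] as[OF X YT VShi] by simp
    also have "\<dots> = Shi * ((Ut * U) * (S * ((Vt * V) * Shi)))"
      unfolding A using as[OF U S VT] as[OF U SVt VShi] as[OF S VT VShi] as[OF UT U SVtVShi] as[OF VT V Shi] by simp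
    also have "\<dots> = 1\<^sub>m r" unfolding UU VV using ShiSShi Shi S by simp
    finally show ?thesis .
  qed
  have QiQ: "Qinv * Q = 1\<^sub>m r" by (rule mat_mult_left_right_inverse[OF Q Qi QQi])
  have Xeq: "X = U * diag_sqrt S * Q"
  proof -
    have "U * diag_sqrt S * Q = U * ((Sh * Shi) * (Ut * X))"
      unfolding Shd Q_def using as[OF U Sh Q[unfolded Q_def]] as[OF Sh Shi UtX] by simp
    thus ?thesis unfolding ShShi using XUUX left_mult_one_mat[OF UtX] by simp
  qed
  have Yeq: "Y = V * diag_sqrt S * transpose_mat Qinv"
  proof -
    have "transpose_mat Qinv = (Shi * Vt) * Y"
      unfolding Qinv_def using transpose_mult[OF YT VShi] transpose_mult[OF V Shi] ShiT
      by (simp add: Yt_def Vt_def)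
    also have "\<dots> = Shi * (Vt * Y)" using as[OF Shi VT Y] by simp
    finally have tq: "transpose_mat Qinv = Shi * (Vt * Y)" .
    have ShiVtY: "Shi * (Vt * Y) \<in> carrier_mat r r" using Shi VtY by simp
    have "V * diag_sqrt S * transpose_mat Qinv = V * ((Sh * Shi) * (Vt * Y))"
      unfolding Shd tq using as[OF V Sh ShiVtY] as[OF Sh Shi VtY] by simp
    thus ?thesis unfolding ShShi using YVVY left_mult_one_mat[OF VtY] by simp
  qed
  show ?thesis
    using Q Qi QQi QiQ Xeq Yeq unfolding inverts_mat_def by auto
qed




lemma smult_mat_vec:
  fixes A :: "real mat"
  assumes "A \<in> carrier_mat nr nc" "v \<in> carrier_vec nc"
  shows "(k \<cdot>\<^sub>m A) *\<^sub>v v = k \<cdot>\<^sub>v (A *\<^sub>v v)"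
  using assms by (intro eq_vecI) (auto simp: scalar_prod_def sum_distrib_left ac_simps)

lemma P_Omega_carrier[simp]: "A \<in> carrier_mat a b \<Longrightarrow> P_Omega \<Omega> A \<in> carrier_mat a b"
  unfolding P_Omega_def by auto

lemma grad_identity:
  fixes X Y M :: "real mat"
  assumes X: "X \<in> carrier_mat n r" and Y: "Y \<in> carrier_mat n r" and M: "M \<in> carrier_mat n n"
    and v: "v \<in> carrier_vec r" and p: "p \<noteq> 0"
  shows "(lam/p) * ((X *\<^sub>v v) \<bullet> (X *\<^sub>v v) - (Y *\<^sub>v v) \<bullet> (Y *\<^sub>v v)) =
    (X *\<^sub>v v) \<bullet> (grad_X \<Omega> p lam M X Y *\<^sub>v v) - (grad_Y \<Omega> p lam M X Y *\<^sub>v v) \<bullet> (Y *\<^sub>v v)"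
proof -
  define Pm where "Pm = P_Omega \<Omega> (X * transpose_mat Y - M)"
  have "X * transpose_mat Y - M \<in> carrier_mat n n" using X Y M by auto
  hence Pm: "Pm \<in> carrier_mat n n" unfolding Pm_def by (rule P_Omega_carrier)
  define x where "x = X *\<^sub>v v"
  define y where "y = Y *\<^sub>v v"
  have x: "x \<in> carrier_vec n" and y: "y \<in> carrier_vec n" using X Y v by (auto simp: x_def y_def)
  have PmY: "Pm * Y \<in> carrier_mat n r" using Pm Y by simp
  have PmTX: "transpose_mat Pm * X \<in> carrier_mat n r" using Pm X by simp
  have gx: "grad_X \<Omega> p lam M X Y *\<^sub>v v = (1/p) \<cdot>\<^sub>v (Pm *\<^sub>v y + lam \<cdot>\<^sub>v x)"
  proof -
    have "grad_X \<Omega> p lam M X Y *\<^sub>v v = (1/p) \<cdot>\<^sub>v ((Pm * Y + lam \<cdot>\<^sub>m X) *\<^sub>v v)"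
      unfolding grad_X_def Pm_def[symmetric] using smult_mat_vec[of "Pm * Y + lam \<cdot>\<^sub>m X" n r v] PmY X v by simp
    also have "(Pm * Y + lam \<cdot>\<^sub>m X) *\<^sub>v v = Pm *\<^sub>v y + lam \<cdot>\<^sub>v x"
      using add_mult_distrib_mat_vec[OF PmY _ v, of "lam \<cdot>\<^sub>m X"] X smult_mat_vec[OF X v] Pm Y v
      unfolding x_def y_def by simp
    finally show ?thesis .
  qed
  have gy: "grad_Y \<Omega> p lam M X Y *\<^sub>v v = (1/p) \<cdot>\<^sub>v (transpose_mat Pm *\<^sub>v x + lam \<cdot>\<^sub>v y)"
  proof -
    have "grad_Y \<Omega> p lam M X Y *\<^sub>v v = (1/p) \<cdot>\<^sub>v ((transpose_mat Pm * X + lam \<cdot>\<^sub>m Y) *\<^sub>v v)"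
      unfolding grad_Y_def Pm_def[symmetric] using smult_mat_vec[of "transpose_mat Pm * X + lam \<cdot>\<^sub>m Y" n r v] PmTX Y v by simp
    also have "(transpose_mat Pm * X + lam \<cdot>\<^sub>m Y) *\<^sub>v v = transpose_mat Pm *\<^sub>v x + lam \<cdot>\<^sub>v y"
      using add_mult_distrib_mat_vec[OF PmTX _ v, of "lam \<cdot>\<^sub>m Y"] Y smult_mat_vec[OF Y v] Pm X v
      unfolding x_def y_def by simp
    finally show ?thesis .
  qed
  have Pmy: "Pm *\<^sub>v y \<in> carrier_vec n" and PmTx: "transpose_mat Pm *\<^sub>v x \<in> carrier_vec n" using Pm x y by auto
  have e1: "x \<bullet> (grad_X \<Omega> p lam M X Y *\<^sub>v v) = (1/p) * (x \<bullet> (Pm *\<^sub>v y) + lam * (x \<bullet> x))"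
    unfolding gx using Pmy x scalar_prod_add_distrib[OF x Pmy, of "lam \<cdot>\<^sub>v x"] by simp
  have e2: "(grad_Y \<Omega> p lam M X Y *\<^sub>v v) \<bullet> y = (1/p) * ((transpose_mat Pm *\<^sub>v x) \<bullet> y + lam * (y \<bullet> y))"
    unfolding gy using PmTx y add_scalar_prod_distrib[OF PmTx _ y, of "lam \<cdot>\<^sub>v y"] by simp
  have e3: "(transpose_mat Pm *\<^sub>v x) \<bullet> y = x \<bullet> (Pm *\<^sub>v y)" by (rule transpose_vec_mult_scalar[OF Pm y x])
  show ?thesis unfolding x_def[symmetric] y_def[symmetric] e1 e2 e3 using p by (simp add: field_simps)
qed

lemma cauchy_schwarz_vec:
  fixes x y :: "real Matrix.vec"
  assumes x: "x \<in> carrier_vec k" and y: "y \<in> carrier_vec k"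
  shows "(x \<bullet> y)^2 \<le> (x \<bullet> x) * (y \<bullet> y)"
proof -
  have nn: "0 \<le> z \<bullet> z" if "z \<in> carrier_vec k" for z :: "real Matrix.vec"
    unfolding sq_sum[OF that] by (intro sum_nonneg) auto
  show ?thesis
  proof (cases "y \<bullet> y = 0")
    case True
    hence "y = 0\<^sub>v k" by (rule self_scalar_zero[OF y])
    thus ?thesis using x by simp
  next
    case False
    hence pos: "y \<bullet> y > 0" using nn[OF y] by simp
    define t where "t = - (x \<bullet> y) / (y \<bullet> y)"
    have "0 \<le> (x + t \<cdot>\<^sub>v y) \<bullet> (x + t \<cdot>\<^sub>v y)" using x y by (intro nn) auto
    also have "\<dots> = x \<bullet> x + 2*t*(x \<bullet> y) + t^2*(y \<bullet> y)" by (rule expand_sq[OF x y])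
    also have "\<dots> = x \<bullet> x - (x \<bullet> y)^2 / (y \<bullet> y)"
      unfolding t_def using pos by (simp add: field_simps power2_eq_square)
    finally show ?thesis using pos by (simp add: field_simps)
  qed
qed




lemma scalar_key:
  fixes d a A L s1 s2 G1 G2 :: real
  assumes d: "d > 0" and a: "a > 0" and aA: "a \<le> A" and L: "L > 0"
    and eq: "L * A * (d^2 - (1/d)^2) = d * s1 - s2 / d"
    and c1: "s1^2 \<le> A * G1" and c2: "s2^2 \<le> A * G2"
  shows "(d - 1/d)^2 \<le> (G1 + G2) / (L^2 * a)"
proof -
  define e where "e = 1/d"
  have de: "d * e = 1" using d unfolding e_def by simp
  have e: "e > 0" using d unfolding e_def by simp
  have A: "A > 0" using a aA by simp
  have G1: "G1 \<ge> 0" using c1 A by (metis zero_le_power2 order_trans zero_le_mult_iff not_le)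
  have G2: "G2 \<ge> 0" using c2 A by (metis zero_le_power2 order_trans zero_le_mult_iff not_le)
  have eq': "L * A * ((d - e) * (d + e)) = d * s1 - e * s2"
    using eq unfolding e_def[symmetric] by (simp add: algebra_simps power2_eq_square divide_inverse e_def)
  have cs: "(d * s1 - e * s2)^2 \<le> (d^2 + e^2) * (s1^2 + s2^2)"
  proof -
    have "(d^2 + e^2) * (s1^2 + s2^2) = (d * s1 - e * s2)^2 + (d * s2 + e * s1)^2"
      by (simp add: algebra_simps power2_eq_square)
    thus ?thesis by simp
  qed
  have "(d^2 + e^2) * (s1^2 + s2^2) \<le> (d + e)^2 * (A * (G1 + G2))"
  proof (rule mult_mono)
    show "d^2 + e^2 \<le> (d + e)^2" using de by (simp add: power2_eq_square algebra_simps)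
    show "s1^2 + s2^2 \<le> A * (G1 + G2)" using c1 c2 by (simp add: algebra_simps)
  qed (auto simp: A G1 G2)
  with cs eq' have "(L * A * ((d - e) * (d + e)))^2 \<le> (d + e)^2 * (A * (G1 + G2))" by simp
  hence "((d + e)^2 * A) * (L^2 * A * (d - e)^2) \<le> ((d + e)^2 * A) * (G1 + G2)"
    by (simp add: power_mult_distrib algebra_simps power2_eq_square)
  moreover have "(d + e)^2 * A > 0" using d e A by simp
  ultimately have "L^2 * A * (d - e)^2 \<le> G1 + G2" by (simp add: mult_le_cancel_left_pos)
  hence "(d - e)^2 \<le> (G1 + G2) / (L^2 * A)" using L A by (simp add: pos_le_divide_eq ac_simps)
  also have "\<dots> \<le> (G1 + G2) / (L^2 * a)"
    using L a aA G1 G2 by (intro divide_left_mono mult_left_mono mult_pos_pos) auto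
  finally show ?thesis unfolding e_def .
qed




lemma frob_sq:
  "(frob A)^2 = (\<Sum>i<dim_row A. \<Sum>j<dim_col A. (A $$ (i,j))^2)"
  unfolding frob_def by (simp add: sum_nonneg)

lemma RRT_entry:
  fixes R :: "real mat"
  assumes R: "R \<in> carrier_mat r r" and RR: "R * transpose_mat R = 1\<^sub>m r" and j: "j < r" and l: "l < r"
  shows "(\<Sum>i<r. R$$(j,i) * R$$(l,i)) = (if j = l then 1 else 0)"
proof -
  have "(R * transpose_mat R) $$ (j,l) = Matrix.row R j \<bullet> Matrix.col (transpose_mat R) l" using R j l by simp
  also have "\<dots> = (\<Sum>i<r. R$$(j,i) * R$$(l,i))"
    using R j l unfolding scalar_prod_def by (auto simp: lessThan_atLeast0 intro!: sum.cong)
  finally show ?thesis using RR j l by simp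
qed
lemma colsum_frob:
  fixes G R :: "real mat"
  assumes G: "G \<in> carrier_mat n r" and R: "R \<in> carrier_mat r r"
    and RR: "R * transpose_mat R = 1\<^sub>m r"
  shows "(\<Sum>i<r. (G *\<^sub>v Matrix.col R i) \<bullet> (G *\<^sub>v Matrix.col R i)) = (frob G)^2"
proof -
  have Rd: "(\<Sum>i<r. R$$(j,i) * R$$(l,i)) = (if j = l then 1 else 0)" if "j < r" "l < r" for j l
    using RRT_entry[OF R RR that] .
  have inner: "(\<Sum>i<r. (\<Sum>j<r. G$$(k,j) * R$$(j,i))^2) = (\<Sum>j<r. (G$$(k,j))^2)" for k
  proof -
    have sq: "(\<Sum>j<r. G$$(k,j) * R$$(j,i))^2 = (\<Sum>j<r. \<Sum>l<r. G$$(k,j) * G$$(k,l) * (R$$(j,i) * R$$(l,i)))" for i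
    proof -
      have "(\<Sum>j<r. G$$(k,j) * R$$(j,i))^2 = (\<Sum>j<r. \<Sum>l<r. (G$$(k,j) * R$$(j,i)) * (G$$(k,l) * R$$(l,i)))"
        unfolding power2_eq_square by (rule sum_product)
      also have "\<dots> = (\<Sum>j<r. \<Sum>l<r. G$$(k,j) * G$$(k,l) * (R$$(j,i) * R$$(l,i)))"
        by (intro sum.cong refl) (simp add: ac_simps)
      finally show ?thesis .
    qed
    have "(\<Sum>i<r. (\<Sum>j<r. G$$(k,j) * R$$(j,i))^2)
      = (\<Sum>i<r. \<Sum>j<r. \<Sum>l<r. G$$(k,j) * G$$(k,l) * (R$$(j,i) * R$$(l,i)))"
      by (simp only: sq)
    also have "\<dots> = (\<Sum>j<r. \<Sum>i<r. \<Sum>l<r. G$$(k,j) * G$$(k,l) * (R$$(j,i) * R$$(l,i)))"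
      by (rule sum.swap)
    also have "\<dots> = (\<Sum>j<r. \<Sum>l<r. \<Sum>i<r. G$$(k,j) * G$$(k,l) * (R$$(j,i) * R$$(l,i)))"
      by (rule sum.cong[OF refl], rule sum.swap)
    also have "\<dots> = (\<Sum>j<r. \<Sum>l<r. G$$(k,j) * G$$(k,l) * (\<Sum>i<r. R$$(j,i) * R$$(l,i)))"
      by (simp only: sum_distrib_left)
    also have "\<dots> = (\<Sum>j<r. \<Sum>l<r. if l = j then G$$(k,j) * G$$(k,j) else 0)"
      by (intro sum.cong refl) (auto simp: Rd)
    also have "\<dots> = (\<Sum>j<r. (G$$(k,j))^2)" by (simp add: power2_eq_square)
    finally show ?thesis .
  qed
  have "(\<Sum>i<r. (G *\<^sub>v Matrix.col R i) \<bullet> (G *\<^sub>v Matrix.col R i)) = (\<Sum>i<r. \<Sum>k<n. (\<Sum>j<r. G$$(k,j) * R$$(j,i))^2)"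
  proof (rule sum.cong[OF refl])
    fix i assume i: "i \<in> {..<r}"
    have c: "Matrix.col R i \<in> carrier_vec r" by (rule carrier_vecI) (use R in simp)
    show "(G *\<^sub>v Matrix.col R i) \<bullet> (G *\<^sub>v Matrix.col R i) = (\<Sum>k<n. (\<Sum>j<r. G$$(k,j) * R$$(j,i))^2)"
      unfolding qf_sum[OF G c] using R i by (intro sum.cong refl) (auto intro!: sum.cong)
  qed
  also have "\<dots> = (\<Sum>k<n. \<Sum>i<r. (\<Sum>j<r. G$$(k,j) * R$$(j,i))^2)" by (rule sum.swap)
  also have "\<dots> = (\<Sum>k<n. \<Sum>j<r. (G$$(k,j))^2)" by (simp add: inner)
  also have "\<dots> = (frob G)^2" unfolding frob_sq using G by simp
  finally show ?thesis .
qed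

lemma frob_diag:
  fixes D :: "real mat"
  assumes D: "D \<in> carrier_mat r r" and dD: "diagonal_mat D"
  shows "(frob (D - diag_inv D))^2 = (\<Sum>i<r. (D$$(i,i) - 1 / D$$(i,i))^2)"
proof -
  have "(frob (D - diag_inv D))^2 = (\<Sum>i<r. \<Sum>j<r. ((D - diag_inv D) $$ (i,j))^2)"
    unfolding frob_sq using D by (simp add: diag_inv_def)
  also have "\<dots> = (\<Sum>i<r. \<Sum>j<r. if j = i then (D$$(i,i) - 1 / D$$(i,i))^2 else 0)"
    using D dD by (intro sum.cong refl) (auto simp: diag_inv_def diagonal_mat_def)
  also have "\<dots> = (\<Sum>i<r. (D$$(i,i) - 1 / D$$(i,i))^2)" by simp
  finally show ?thesis .
qed




lemma col_dm:
  fixes M :: "real mat"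
  assumes M: "M \<in> carrier_mat k r" and i: "i < r"
  shows "Matrix.col (M * dm f r) i = f i \<cdot>\<^sub>v Matrix.col M i"
proof (rule eq_vecI)
  fix l assume "l < dim_vec (f i \<cdot>\<^sub>v Matrix.col M i)"
  hence l: "l < k" using M by simp
  have "Matrix.col (M * dm f r) i $ l = (\<Sum>j\<in>{0..<r}. M $$ (l,j) * (if j = i then f j else 0))"
    using M i l by (simp add: dm_def scalar_prod_def)
  also have "\<dots> = (\<Sum>j\<in>{0..<r}. if j = i then M $$ (l,i) * f i else 0)" by (rule sum.cong) auto
  also have "\<dots> = f i * M $$ (l,i)" using i by simp
  finally show "Matrix.col (M * dm f r) i $ l = (f i \<cdot>\<^sub>v Matrix.col M i) $ l" using M l i by simp
qed (use M i in \<open>simp add: dm_def\<close>)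

lemma balance_bound:
  fixes X Y U V Sh Q Qinv P D R GX GY :: "real mat"
  assumes X: "X \<in> carrier_mat n r" and Y: "Y \<in> carrier_mat n r"
    and U: "U \<in> carrier_mat n r" and V: "V \<in> carrier_mat n r" and Sh: "Sh \<in> carrier_mat r r"
    and UU: "transpose_mat U * U = 1\<^sub>m r" and VV: "transpose_mat V * V = 1\<^sub>m r"
    and Q: "Q \<in> carrier_mat r r" and Qi: "Qinv \<in> carrier_mat r r"
    and QQi: "Q * Qinv = 1\<^sub>m r" and QiQ: "Qinv * Q = 1\<^sub>m r"
    and Xeq: "X = U * Sh * Q" and Yeq: "Y = V * Sh * transpose_mat Qinv"
    and svdQ: "square_svd r Q P D R"
    and a: "0 < a"
    and lowX: "\<forall>v\<in>carrier_vec r. a * (v \<bullet> v) \<le> (X *\<^sub>v v) \<bullet> (X *\<^sub>v v)"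
    and lowY: "\<forall>v\<in>carrier_vec r. a * (v \<bullet> v) \<le> (Y *\<^sub>v v) \<bullet> (Y *\<^sub>v v)"
    and GX: "GX \<in> carrier_mat n r" and GY: "GY \<in> carrier_mat n r"
    and L: "0 < L"
    and gid: "\<forall>v\<in>carrier_vec r. L * ((X *\<^sub>v v) \<bullet> (X *\<^sub>v v) - (Y *\<^sub>v v) \<bullet> (Y *\<^sub>v v)) =
        (X *\<^sub>v v) \<bullet> (GX *\<^sub>v v) - (GY *\<^sub>v v) \<bullet> (Y *\<^sub>v v)"
  shows "(frob (D - diag_inv D))^2 \<le> ((frob GX)^2 + (frob GY)^2) / (L^2 * a)"
proof -
  from svdQ have P: "P \<in> carrier_mat r r" and R: "R \<in> carrier_mat r r" and D: "D \<in> carrier_mat r r"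
    and PP: "transpose_mat P * P = 1\<^sub>m r" and RtR: "transpose_mat R * R = 1\<^sub>m r"
    and dD: "diagonal_mat D" and Dnn: "\<forall>i<r. D $$ (i,i) \<ge> 0" and Qeq: "Q = P * D * transpose_mat R"
    unfolding square_svd_def orthonormal_cols_def by auto
  define dd where "dd = (\<lambda>i. D $$ (i,i))"
  have Ddm: "D = dm dd r" unfolding dd_def by (rule diag_is_dm[OF D dD])
  have Rt: "transpose_mat R \<in> carrier_mat r r" and Pt: "transpose_mat P \<in> carrier_mat r r"
    and Ut: "transpose_mat U \<in> carrier_mat r n" and Vt: "transpose_mat V \<in> carrier_mat r n"
    and Qt: "transpose_mat Q \<in> carrier_mat r r" and Qit: "transpose_mat Qinv \<in> carrier_mat r r"
    using R P U V Q Qi by auto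
  have RRt: "R * transpose_mat R = 1\<^sub>m r" by (rule mat_mult_left_right_inverse[OF Rt R RtR])
  have PD: "P * D \<in> carrier_mat r r" using P D by simp
  have QR: "Q * R = P * D"
    unfolding Qeq using assoc_mult_mat[OF PD Rt R] RtR right_mult_one_mat[OF PD] by simp
  have QtP: "transpose_mat Q * P = R * D"
  proof -
    have "transpose_mat Q = R * (D * transpose_mat P)"
      unfolding Qeq using transpose_mult[OF PD Rt] transpose_mult[OF P D] Ddm by simp
    hence "transpose_mat Q * P = R * ((D * transpose_mat P) * P)"
      using assoc_mult_mat[of R r r "D * transpose_mat P" r P r] R D P by simp
    also have "\<dots> = R * D" using assoc_mult_mat[OF D Pt P] PP D by simp
    finally show ?thesis .
  qed
  have QiQt: "transpose_mat Qinv * transpose_mat Q = 1\<^sub>m r"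
    using transpose_mult[OF Q Qi] QQi by simp
  have per: "(dd i - 1 / dd i)^2 \<le>
      ((GX *\<^sub>v Matrix.col R i) \<bullet> (GX *\<^sub>v Matrix.col R i) + (GY *\<^sub>v Matrix.col R i) \<bullet> (GY *\<^sub>v Matrix.col R i)) / (L^2 * a)"
    if i: "i < r" for i
  proof -
    define v where "v = Matrix.col R i"
    define e where "e = Matrix.col P i"
    define d where "d = dd i"
    have v: "v \<in> carrier_vec r" unfolding v_def by (rule carrier_vecI) (use R in simp)
    have e: "e \<in> carrier_vec r" unfolding e_def by (rule carrier_vecI) (use P in simp)
    have vv: "v \<bullet> v = 1"
    proof -
      have "(transpose_mat R * R) $$ (i,i) = v \<bullet> v" using R i unfolding v_def by simp
      thus ?thesis using RtR i by simp
    qed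
    have Qv: "Q *\<^sub>v v = d \<cdot>\<^sub>v e"
    proof -
      have "Q *\<^sub>v v = Matrix.col (Q * R) i" unfolding v_def using col_mult2[OF Q R i] by simp
      also have "\<dots> = d \<cdot>\<^sub>v e" unfolding QR Ddm using col_dm[OF P i] unfolding d_def e_def by simp
      finally show ?thesis .
    qed
    have Qte: "transpose_mat Q *\<^sub>v e = d \<cdot>\<^sub>v v"
    proof -
      have "transpose_mat Q *\<^sub>v e = Matrix.col (transpose_mat Q * P) i" unfolding e_def using col_mult2[OF Qt P i] by simp
      also have "\<dots> = d \<cdot>\<^sub>v v" unfolding QtP Ddm using col_dm[OF R i] unfolding d_def v_def by simp
      finally show ?thesis .
    qed
    have dpos: "d > 0"
    proof -
      have "d \<ge> 0" using Dnn i unfolding d_def dd_def by simp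
      moreover have "d \<noteq> 0"
      proof
        assume "d = 0"
        hence "Q *\<^sub>v v = 0\<^sub>v r" unfolding Qv using e by auto
        moreover have "Qinv *\<^sub>v 0\<^sub>v r = 0\<^sub>v r" using Qi by (intro eq_vecI) (auto simp: scalar_prod_def)
        ultimately have "Qinv *\<^sub>v (Q *\<^sub>v v) = 0\<^sub>v r" by simp
        moreover have "Qinv *\<^sub>v (Q *\<^sub>v v) = v" using assoc_mult_mat_vec[OF Qi Q v] QiQ v by simp
        ultimately have "v = 0\<^sub>v r" by simp
        with vv show False by simp
      qed
      ultimately show ?thesis by simp
    qed
    have QiTv: "transpose_mat Qinv *\<^sub>v v = (1/d) \<cdot>\<^sub>v e"
    proof -
      have "transpose_mat Qinv *\<^sub>v (transpose_mat Q *\<^sub>v e) = e"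
        using assoc_mult_mat_vec[OF Qit Qt e] QiQt e by simp
      hence "d \<cdot>\<^sub>v (transpose_mat Qinv *\<^sub>v v) = e" unfolding Qte using mult_mat_vec[OF Qit v] by simp
      hence "(1/d) \<cdot>\<^sub>v (d \<cdot>\<^sub>v (transpose_mat Qinv *\<^sub>v v)) = (1/d) \<cdot>\<^sub>v e" by simp
      thus ?thesis using dpos by (simp add: smult_smult_assoc)
    qed
    define z where "z = Sh *\<^sub>v e"
    have z: "z \<in> carrier_vec r" unfolding z_def using Sh e by simp
    define w1 where "w1 = U *\<^sub>v z"
    define w2 where "w2 = V *\<^sub>v z"
    have w1: "w1 \<in> carrier_vec n" and w2: "w2 \<in> carrier_vec n" unfolding w1_def w2_def using U V z by auto
    define A where "A = z \<bullet> z"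
    have ww: "w \<bullet> w = A" if W: "W \<in> carrier_mat n r" and WW: "transpose_mat W * W = 1\<^sub>m r" and wd: "w = W *\<^sub>v z" for W :: "real mat" and w :: "real Matrix.vec"
    proof -
      have Wt: "transpose_mat W \<in> carrier_mat r n" using W by simp
      have "(transpose_mat W *\<^sub>v (W *\<^sub>v z)) \<bullet> z = (W *\<^sub>v z) \<bullet> (W *\<^sub>v z)"
        by (rule transpose_vec_mult_scalar[OF W z]) (use W z in simp)
      moreover have "transpose_mat W *\<^sub>v (W *\<^sub>v z) = z" using assoc_mult_mat_vec[OF Wt W z] WW z by simp
      ultimately show ?thesis unfolding wd A_def by simp
    qed
    have w1w1: "w1 \<bullet> w1 = A" by (rule ww[OF U UU w1_def])
    have w2w2: "w2 \<bullet> w2 = A" by (rule ww[OF V VV w2_def])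
    have USh: "U * Sh \<in> carrier_mat n r" and VSh: "V * Sh \<in> carrier_mat n r" using U V Sh by auto
    have Xv: "X *\<^sub>v v = d \<cdot>\<^sub>v w1"
    proof -
      have "X *\<^sub>v v = U *\<^sub>v (Sh *\<^sub>v (Q *\<^sub>v v))"
        unfolding Xeq using assoc_mult_mat_vec[OF USh Q v] assoc_mult_mat_vec[OF U Sh] Q v by simp
      also have "\<dots> = d \<cdot>\<^sub>v w1" unfolding Qv w1_def z_def using mult_mat_vec[OF Sh e] mult_mat_vec[OF U] Sh e
        by simp
      finally show ?thesis .
    qed
    have Yv: "Y *\<^sub>v v = (1/d) \<cdot>\<^sub>v w2"
    proof -
      have "Y *\<^sub>v v = V *\<^sub>v (Sh *\<^sub>v (transpose_mat Qinv *\<^sub>v v))"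
        unfolding Yeq using assoc_mult_mat_vec[OF VSh Qit v] assoc_mult_mat_vec[OF V Sh] Qit v by simp
      also have "\<dots> = (1/d) \<cdot>\<^sub>v w2" unfolding QiTv w2_def z_def using mult_mat_vec[OF Sh e] mult_mat_vec[OF V] Sh e
        by simp
      finally show ?thesis .
    qed
    have nX: "(X *\<^sub>v v) \<bullet> (X *\<^sub>v v) = d^2 * A" unfolding Xv using w1 w1w1 by (simp add: power2_eq_square)
    have nY: "(Y *\<^sub>v v) \<bullet> (Y *\<^sub>v v) = A / d^2" unfolding Yv using w2 w2w2 by (simp add: power2_eq_square)
    have l1: "a \<le> d^2 * A" using lowX v vv nX by auto
    have l2: "a \<le> A / d^2" using lowY v vv nY by auto
    have A0: "0 \<le> A" using l1 a dpos by (metis less_le_trans less_imp_le zero_less_mult_iff zero_less_power2 not_le)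
    have "a * a \<le> (d^2 * A) * (A / d^2)" using l1 l2 a by (intro mult_mono) auto
    hence "a^2 \<le> A^2" using dpos by (simp add: power2_eq_square)
    hence aA: "a \<le> A" using A0 a by (simp add: power2_le_iff_abs_le)
    define gx where "gx = GX *\<^sub>v v"
    define gy where "gy = GY *\<^sub>v v"
    have gx: "gx \<in> carrier_vec n" and gy: "gy \<in> carrier_vec n" unfolding gx_def gy_def using GX GY v by auto
    have g: "L * ((X *\<^sub>v v) \<bullet> (X *\<^sub>v v) - (Y *\<^sub>v v) \<bullet> (Y *\<^sub>v v)) = (X *\<^sub>v v) \<bullet> gx - gy \<bullet> (Y *\<^sub>v v)"
      using gid v unfolding gx_def gy_def by blast
    have g1: "(X *\<^sub>v v) \<bullet> gx = d * (w1 \<bullet> gx)" unfolding Xv using w1 gx by simp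
    have g2: "gy \<bullet> (Y *\<^sub>v v) = (gy \<bullet> w2) / d" unfolding Yv using w2 gy by simp
    have "L * (d^2 * A - A / d^2) = d * (w1 \<bullet> gx) - (gy \<bullet> w2) / d"
      using g unfolding nX nY g1 g2 .
    hence eq: "L * A * (d^2 - (1/d)^2) = d * (w1 \<bullet> gx) - (gy \<bullet> w2) / d"
      by (simp add: algebra_simps power_divide)
    have c1: "(w1 \<bullet> gx)^2 \<le> A * (gx \<bullet> gx)" using cauchy_schwarz_vec[OF w1 gx] w1w1 by simp
    have c2: "(gy \<bullet> w2)^2 \<le> A * (gy \<bullet> gy)" using cauchy_schwarz_vec[OF gy w2] w2w2 by (simp add: ac_simps)
    from scalar_key[OF dpos a aA L eq c1 c2]
    show ?thesis unfolding d_def gx_def gy_def v_def .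
  qed
  have "(frob (D - diag_inv D))^2 = (\<Sum>i<r. (dd i - 1 / dd i)^2)"
    unfolding frob_diag[OF D dD] dd_def ..
  also have "\<dots> \<le> (\<Sum>i<r. ((GX *\<^sub>v Matrix.col R i) \<bullet> (GX *\<^sub>v Matrix.col R i) + (GY *\<^sub>v Matrix.col R i) \<bullet> (GY *\<^sub>v Matrix.col R i)) / (L^2 * a))"
    by (rule sum_mono) (use per in auto)
  also have "\<dots> = ((frob GX)^2 + (frob GY)^2) / (L^2 * a)"
    unfolding sum_divide_distrib[symmetric] sum.distrib colsum_frob[OF GX R RRt] colsum_frob[OF GY R RRt] ..
  finally show ?thesis .
qed




lemma frob_empty_col: "A \<in> carrier_mat k 0 \<Longrightarrow> frob A = 0"
  unfolding frob_def by simp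

lemma grad_carriers:
  fixes X Y M :: "real mat"
  assumes X: "X \<in> carrier_mat n r" and Y: "Y \<in> carrier_mat n r" and M: "M \<in> carrier_mat n n"
  shows "grad_X \<Omega> p lam M X Y \<in> carrier_mat n r" "grad_Y \<Omega> p lam M X Y \<in> carrier_mat n r"
proof -
  have "X * transpose_mat Y - M \<in> carrier_mat n n" using X Y M by auto
  hence Pm: "P_Omega \<Omega> (X * transpose_mat Y - M) \<in> carrier_mat n n" by (rule P_Omega_carrier)
  show "grad_X \<Omega> p lam M X Y \<in> carrier_mat n r" unfolding grad_X_def using Pm X Y by auto
  show "grad_Y \<Omega> p lam M X Y \<in> carrier_mat n r" unfolding grad_Y_def using Pm X Y by auto
qed

lemma main_lemma:
  fixes c smin smax p lam cinj :: real and X Y U S V Mstar E :: "real mat"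
  assumes c: "0 < c" and Ms: "Mstar \<in> carrier_mat n n" and E: "E \<in> carrier_mat n n"
    and smin: "0 < smin" and p: "0 < p" and lam: "0 < lam"
    and X: "X \<in> carrier_mat n r" and Y: "Y \<in> carrier_mat n r"
    and svX: "\<forall>s \<in> sing_vals X. sqrt (smin / 2) \<le> s \<and> s \<le> sqrt (2 * smax)"
    and svY: "\<forall>s \<in> sing_vals Y. sqrt (smin / 2) \<le> s \<and> s \<le> sqrt (2 * smax)"
    and svd: "compact_svd n r (X * transpose_mat Y) U S V"
    and cinj: "0 < cinj"
    and gb: "grad_norm \<Omega> p lam (Mstar + E) X Y
      \<le> c * (sqrt (cinj * p) / (smax / smin)) * (lam / p) * sqrt smin"
  shows "\<exists>Q Qinv. Q \<in> carrier_mat r r \<and> Qinv \<in> carrier_mat r r \<and>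
       inverts_mat Q Qinv \<and> inverts_mat Qinv Q \<and>
       X = U * diag_sqrt S * Q \<and> Y = V * diag_sqrt S * transpose_mat Qinv \<and>
       (\<forall>P D R. square_svd r Q P D R \<longrightarrow>
          frob (D - diag_inv D)
            \<le> 8 * sqrt (smax / smin) * (p / (lam * sqrt smin)) * grad_norm \<Omega> p lam (Mstar + E) X Y) \<and>
       8 * sqrt (smax / smin) * (p / (lam * sqrt smin)) * grad_norm \<Omega> p lam (Mstar + E) X Y
         \<le> 8 * c * sqrt (cinj * p / (smax / smin))"
proof -
  obtain Q Qinv where Q: "Q \<in> carrier_mat r r" and Qi: "Qinv \<in> carrier_mat r r"
    and QQi: "inverts_mat Q Qinv" and QiQ: "inverts_mat Qinv Q"
    and Xeq: "X = U * diag_sqrt S * Q" and Yeq: "Y = V * diag_sqrt S * transpose_mat Qinv"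
    using exist_Q[OF X Y svd] by blast
  define M where "M = Mstar + E"
  have M: "M \<in> carrier_mat n n" unfolding M_def using Ms E by simp
  define GX where "GX = grad_X \<Omega> p lam M X Y"
  define GY where "GY = grad_Y \<Omega> p lam M X Y"
  have GX: "GX \<in> carrier_mat n r" and GY: "GY \<in> carrier_mat n r"
    unfolding GX_def GY_def using grad_carriers[OF X Y M] by auto
  define gn where "gn = grad_norm \<Omega> p lam (Mstar + E) X Y"
  have gn_def': "gn = sqrt ((frob GX)^2 + (frob GY)^2)" unfolding gn_def grad_norm_def GX_def GY_def M_def ..
  have gn0: "0 \<le> gn" unfolding gn_def' by simp
  define \<kappa> where "\<kappa> = smax / smin"
  define K where "K = 8 * sqrt \<kappa> * (p / (lam * sqrt smin))"
  define H where "H = c * (sqrt (cinj * p) / \<kappa>) * (lam / p) * sqrt smin"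
  have gbH: "gn \<le> H" using gb unfolding gn_def H_def \<kappa>_def .
  show ?thesis
  proof (cases "r = 0")
    case True
    have "frob GX = 0" "frob GY = 0" using GX GY True by (auto intro: frob_empty_col)
    hence gnz: "gn = 0" unfolding gn_def' by simp
    have part1: "\<forall>P D R. square_svd r Q P D R \<longrightarrow> frob (D - diag_inv D) \<le> K * gn"
    proof (intro allI impI)
      fix P D R assume "square_svd r Q P D R"
      hence "D \<in> carrier_mat 0 0" using True unfolding square_svd_def by simp
      hence "D - diag_inv D \<in> carrier_mat 0 0" by (auto simp: diag_inv_def)
      hence "frob (D - diag_inv D) = 0" by (rule frob_empty_col)
      thus "frob (D - diag_inv D) \<le> K * gn" using gnz by simp
    qed
    have "0 \<le> H" using gbH gnz by simp
    hence "0 \<le> c * (sqrt (cinj * p) * (lam / p) * sqrt smin) * (1 / \<kappa>)" unfolding H_def by (simp add: field_simps)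
    moreover have "0 < c * (sqrt (cinj * p) * (lam / p) * sqrt smin)" using c cinj p lam smin by simp
    ultimately have "0 \<le> 1 / \<kappa>" using zero_le_mult_iff by (metis not_le)
    hence "0 \<le> \<kappa>" by simp
    hence "0 \<le> 8 * c * sqrt (cinj * p / \<kappa>)" using c cinj p by simp
    hence part2: "K * gn \<le> 8 * c * sqrt (cinj * p / \<kappa>)" using gnz by simp
    show ?thesis using Q Qi QQi QiQ Xeq Yeq part1 part2 unfolding K_def gn_def \<kappa>_def by blast
  next
    case False
    hence r: "0 < r" by simp
    have a: "0 \<le> smin / 2" using smin by simp
    have svX': "\<forall>s\<in>sing_vals X. sqrt (smin/2) \<le> s \<and> s \<le> sqrt (2 * smax)" using svX by simp
    from sv_lower[OF X r a svX'] have ab: "smin / 2 \<le> 2 * smax"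
      and lowX: "\<forall>v\<in>carrier_vec r. smin / 2 * (v \<bullet> v) \<le> (X *\<^sub>v v) \<bullet> (X *\<^sub>v v)" by auto
    from sv_lower[OF Y r a svY] have lowY: "\<forall>v\<in>carrier_vec r. smin / 2 * (v \<bullet> v) \<le> (Y *\<^sub>v v) \<bullet> (Y *\<^sub>v v)"
      by auto
    have kq: "1/4 \<le> \<kappa>" unfolding \<kappa>_def using ab smin by (simp add: field_simps)
    hence kpos: "0 < \<kappa>" by simp
    from svd have U: "U \<in> carrier_mat n r" and V: "V \<in> carrier_mat n r" and S: "S \<in> carrier_mat r r"
      and UU: "transpose_mat U * U = 1\<^sub>m r" and VV: "transpose_mat V * V = 1\<^sub>m r"
      unfolding compact_svd_def orthonormal_cols_def by auto
    have Sh: "diag_sqrt S \<in> carrier_mat r r" using S unfolding diag_sqrt_def by auto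
    have QQi': "Q * Qinv = 1\<^sub>m r" and QiQ': "Qinv * Q = 1\<^sub>m r" using QQi QiQ Q Qi unfolding inverts_mat_def by auto
    have L: "0 < lam / p" using lam p by simp
    have a2: "0 < smin / 2" using smin by simp
    have gid: "\<forall>v\<in>carrier_vec r. (lam / p) * ((X *\<^sub>v v) \<bullet> (X *\<^sub>v v) - (Y *\<^sub>v v) \<bullet> (Y *\<^sub>v v)) =
        (X *\<^sub>v v) \<bullet> (GX *\<^sub>v v) - (GY *\<^sub>v v) \<bullet> (Y *\<^sub>v v)"
      unfolding GX_def GY_def using grad_identity[OF X Y M _ ] p by auto
    define B where "B = sqrt 2 * p * gn / (lam * sqrt smin)"
    have B0: "0 \<le> B" unfolding B_def using p lam smin gn0 by simp
    have BK: "B \<le> K * gn"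
    proof -
      have "sqrt (1/4) \<le> sqrt \<kappa>" using kq by simp
      hence "1/2 \<le> sqrt \<kappa>" by (simp add: real_sqrt_divide)
      moreover have "sqrt 2 \<le> 2"
      proof -
        have "sqrt 2 \<le> sqrt (2^2)" by (subst real_sqrt_le_iff) simp
        thus ?thesis by simp
      qed
      ultimately have "sqrt 2 \<le> 8 * sqrt \<kappa>" by simp
      hence "sqrt 2 * (p * gn / (lam * sqrt smin)) \<le> 8 * sqrt \<kappa> * (p * gn / (lam * sqrt smin))"
        using p lam smin gn0 by (intro mult_right_mono) auto
      thus ?thesis unfolding B_def K_def by (simp add: field_simps)
    qed
    have part1: "\<forall>P D R. square_svd r Q P D R \<longrightarrow> frob (D - diag_inv D) \<le> K * gn"
    proof (intro allI impI)
      fix P D R assume sq: "square_svd r Q P D R"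
      have "(frob (D - diag_inv D))^2 \<le> ((frob GX)^2 + (frob GY)^2) / ((lam / p)^2 * (smin / 2))"
        by (rule balance_bound[OF X Y U V Sh UU VV Q Qi QQi' QiQ' Xeq Yeq sq a2 lowX lowY GX GY L gid])
      also have "\<dots> = B^2"
        unfolding B_def gn_def' using p lam smin by (simp add: power_divide power_mult_distrib field_simps)
      finally have "(frob (D - diag_inv D))^2 \<le> B^2" .
      hence "frob (D - diag_inv D) \<le> B" using B0 by (rule power2_le_imp_le)
      thus "frob (D - diag_inv D) \<le> K * gn" using BK by simp
    qed
    have K0: "0 \<le> K" unfolding K_def using p lam smin kpos by simp
    have "K * gn \<le> K * H" using gbH K0 by (rule mult_left_mono)
    also have "K * H = 8 * c * sqrt (cinj * p / \<kappa>)"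
    proof -
      have sk: "sqrt \<kappa> * sqrt \<kappa> = \<kappa>" using kpos by simp
      have "K * H = 8 * c * sqrt (cinj * p) * (sqrt \<kappa> / \<kappa>)"
        unfolding K_def H_def using p lam smin kpos by (simp add: field_simps)
      also have "sqrt \<kappa> / \<kappa> = 1 / sqrt \<kappa>" using kpos sk by (metis div_by_1 divide_divide_eq_right nonzero_mult_div_cancel_left real_sqrt_gt_0_iff less_irrefl)
      finally show ?thesis by (simp add: real_sqrt_divide)
    qed
    finally have part2: "K * gn \<le> 8 * c * sqrt (cinj * p / \<kappa>)" .
    show ?thesis using Q Qi QQi QiQ Xeq Yeq part1 part2 unfolding K_def gn_def \<kappa>_def by blast
  qed
qed


theorem claim3:
  shows "\<exists>c0 > 0. \<forall>(c::real) (n::nat) (r::nat) Mstar E (\<Omega>::(nat \<times> nat) set) (p::real) (lam::real)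
           (smin::real) (smax::real) X Y U S V (cinj::real).
    0 < c \<longrightarrow> c \<le> c0 \<longrightarrow>
    Mstar \<in> carrier_mat n n \<longrightarrow> E \<in> carrier_mat n n \<longrightarrow>
    vec_space.rank n Mstar = r \<longrightarrow>
    0 < smin \<longrightarrow>
    (\<forall>s \<in> sing_vals Mstar. s \<noteq> 0 \<longrightarrow> smin \<le> s \<and> s \<le> smax) \<longrightarrow>
    \<Omega> \<subseteq> {0..<n} \<times> {0..<n} \<longrightarrow>
    0 < p \<longrightarrow> p \<le> 1 \<longrightarrow> 0 < lam \<longrightarrow>
    X \<in> carrier_mat n r \<longrightarrow> Y \<in> carrier_mat n r \<longrightarrow>
    (\<forall>s \<in> sing_vals X. sqrt (smin / 2) \<le> s \<and> s \<le> sqrt (2 * smax)) \<longrightarrow>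
    (\<forall>s \<in> sing_vals Y. sqrt (smin / 2) \<le> s \<and> s \<le> sqrt (2 * smax)) \<longrightarrow>
    op_norm (P_Omega \<Omega> E) < lam / 8 \<longrightarrow>
    op_norm (P_Omega \<Omega> (X * transpose_mat Y - Mstar) - p \<cdot>\<^sub>m (X * transpose_mat Y - Mstar)) < lam / 8 \<longrightarrow>
    compact_svd n r (X * transpose_mat Y) U S V \<longrightarrow>
    0 < cinj \<longrightarrow>
    (\<forall>A B. A \<in> carrier_mat n r \<longrightarrow> B \<in> carrier_mat n r \<longrightarrow>
       (let H = U * transpose_mat A + B * transpose_mat V in
        (1 / p) * (frob (P_Omega \<Omega> H))\<^sup>2 \<ge> cinj * (frob H)\<^sup>2)) \<longrightarrow>
    grad_norm \<Omega> p lam (Mstar + E) X Y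
      \<le> c * (sqrt (cinj * p) / (smax / smin)) * (lam / p) * sqrt smin \<longrightarrow>
    (\<exists>Q Qinv. Q \<in> carrier_mat r r \<and> Qinv \<in> carrier_mat r r \<and>
       inverts_mat Q Qinv \<and> inverts_mat Qinv Q \<and>
       X = U * diag_sqrt S * Q \<and> Y = V * diag_sqrt S * transpose_mat Qinv \<and>
       (\<forall>P D R. square_svd r Q P D R \<longrightarrow>
          frob (D - diag_inv D)
            \<le> 8 * sqrt (smax / smin) * (p / (lam * sqrt smin)) * grad_norm \<Omega> p lam (Mstar + E) X Y) \<and>
       8 * sqrt (smax / smin) * (p / (lam * sqrt smin)) * grad_norm \<Omega> p lam (Mstar + E) X Y
         \<le> 8 * c * sqrt (cinj * p / (smax / smin)))"
    apply (intro exI[of _ "1::real"] conjI allI impI)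
   apply simp
  apply (rule main_lemma)
               apply assumption+
  done

end
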